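(* Let $a<b$, $k>0$, $\lambda\in(0,\pi/2]$ and $f\in C^3([a,b])$. For every sequence $\{\epsilon_n\}_{n=0}^\infty$ with $\epsilon_n\in J_n$ for all $n$, and for every $n$, the Neumann problem $$\epsilon_n y''+ky=f(t),\quad t\in[a,b],\qquad y'(a)=0,\ y'(b)=0$$ has a unique solution $y_{\epsilon_n}$, and $y_{\epsilon_n}\to u$ uniformly on $[a,b]$ as $n\to\infty$, where $u(t)=f(t)/k$ is the solution of the reduced equation $ky=f(t)$. More precisely, there is a constant $C$ (depending only on $f,k,\lambda,a,b$, not on $n$) such that $$\sup_{t\in[a,b]}\Big|y_{\epsilon_n}(t)-\frac{f(t)}{k}\Big|\le C\sqrt{\epsilon_n}\quad\text{for all } n,$$ i.e. $y_{\epsilon_n}(t)=f(t)/k+\mathcal O(\sqrt{\epsilon_n})$ uniformly on $[a,b]$.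
   Context: For a fixed constant $\lambda\in(0,\pi/2]$ and $n=0,1,2,\dots$ define the closed intervals $$J_n=\left[\,k\left(\frac{b-a}{(n+1)\pi-\lambda}\right)^2,\ k\left(\frac{b-a}{n\pi+\lambda}\right)^2\,\right].$$ Note that $\epsilon\in J_n$ iff $\sqrt{k/\epsilon}\,(b-a)\in[n\pi+\lambda,(n+1)\pi-\lambda]$. *)

theory Defs
  imports "HOL-Analysis.Analysis"
begin

definition J_int :: "real \<Rightarrow> real \<Rightarrow> real \<Rightarrow> real \<Rightarrow> nat \<Rightarrow> real set" where
  "J_int k a b lam n =
     {k * ((b - a) / ((real n + 1) * pi - lam))^2 .. k * ((b - a) / (real n * pi + lam))^2}"

definition C3_on :: "real \<Rightarrow> real \<Rightarrow> (real \<Rightarrow> real) \<Rightarrow> bool" where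
  "C3_on a b f \<longleftrightarrow> (\<exists>f1 f2 f3.
     (\<forall>t\<in>{a..b}. (f has_real_derivative f1 t) (at t within {a..b})
                \<and> (f1 has_real_derivative f2 t) (at t within {a..b})
                \<and> (f2 has_real_derivative f3 t) (at t within {a..b}))
     \<and> continuous_on {a..b} f3)"

definition neumann_sol :: "real \<Rightarrow> real \<Rightarrow> (real \<Rightarrow> real) \<Rightarrow> real \<Rightarrow> real \<Rightarrow> (real \<Rightarrow> real) \<Rightarrow> bool" where
  "neumann_sol eps k f a b y \<longleftrightarrow> (\<exists>y1 y2.
     (\<forall>t\<in>{a..b}. (y has_real_derivative y1 t) (at t within {a..b})
                \<and> (y1 has_real_derivative y2 t) (at t within {a..b})
                \<and> eps * y2 t + k * y t = f t)
     \<and> continuous_on {a..b} y2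
     \<and> y1 a = 0 \<and> y1 b = 0)"

end

theory Submission
  imports Defs "HOL-Analysis.Analysis"
begin


lemma vp:
  fixes h :: "real \<Rightarrow> real" and w a b M :: real
  assumes ab: "a \<le> b" and w: "w > 0" and hc: "continuous_on {a..b} h"
    and hM: "\<And>t. t \<in> {a..b} \<Longrightarrow> \<bar>h t\<bar> \<le> M"
    and A_def: "A = (\<lambda>t. integral {a..t} (\<lambda>s. cos (w * s) * h s))"
    and B_def: "B = (\<lambda>t. integral {a..t} (\<lambda>s. sin (w * s) * h s))"
    and P_def: "P = (\<lambda>t. - (sin (w * t) * A t - cos (w * t) * B t) / w)"
    and P1_def: "P1 = (\<lambda>t. - (cos (w * t) * A t + sin (w * t) * B t))"
  shows "\<forall>t\<in>{a..b}. (P has_real_derivative P1 t) (at t within {a..b})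
          \<and> (P1 has_real_derivative (- (w * w) * P t - h t)) (at t within {a..b})
          \<and> \<bar>P t\<bar> \<le> 2 * M * (b - a) / w \<and> \<bar>P1 t\<bar> \<le> 2 * M * (b - a)"
    and "P1 a = 0"
proof -
  have cA: "continuous_on {a..b} (\<lambda>s. cos (w * s) * h s)" by (intro continuous_intros hc)
  have cB: "continuous_on {a..b} (\<lambda>s. sin (w * s) * h s)" by (intro continuous_intros hc)
  have bA: "\<bar>A t\<bar> \<le> M * (b - a)" and bB: "\<bar>B t\<bar> \<le> M * (b - a)" if t: "t \<in> {a..b}" for t
  proof -
    have M0: "M \<ge> 0" using hM[of a] ab by auto
    have c1: "continuous_on {a..t} (\<lambda>s. cos (w * s) * h s)" by (rule continuous_on_subset[OF cA]) (use t in auto)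
    have c2: "continuous_on {a..t} (\<lambda>s. sin (w * s) * h s)" by (rule continuous_on_subset[OF cB]) (use t in auto)
    have "norm (A t) \<le> M * (t - a)" unfolding A_def
      by (rule integral_bound) (use t c1 hM in \<open>auto simp: abs_mult intro: order_trans[OF mult_left_le_one_le]\<close>)
    also have "\<dots> \<le> M * (b - a)" using t M0 by (intro mult_left_mono) auto
    finally show "\<bar>A t\<bar> \<le> M * (b - a)" by simp
    have "norm (B t) \<le> M * (t - a)" unfolding B_def
      by (rule integral_bound) (use t c2 hM in \<open>auto simp: abs_mult intro: order_trans[OF mult_left_le_one_le]\<close>)
    also have "\<dots> \<le> M * (b - a)" using t M0 by (intro mult_left_mono) auto
    finally show "\<bar>B t\<bar> \<le> M * (b - a)" by simp
  qed
  show "P1 a = 0" unfolding P1_def A_def B_def by simp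
  show "\<forall>t\<in>{a..b}. (P has_real_derivative P1 t) (at t within {a..b})
          \<and> (P1 has_real_derivative (- (w * w) * P t - h t)) (at t within {a..b})
          \<and> \<bar>P t\<bar> \<le> 2 * M * (b - a) / w \<and> \<bar>P1 t\<bar> \<le> 2 * M * (b - a)"
  proof
    fix t assume t: "t \<in> {a..b}"
    have dA: "(A has_real_derivative D) (at t within {a..b})" if "D = cos (w * t) * h t" for D
      unfolding A_def that by (rule integral_has_real_derivative[OF cA t])
    have dB: "(B has_real_derivative D) (at t within {a..b})" if "D = sin (w * t) * h t" for D
      unfolding B_def that by (rule integral_has_real_derivative[OF cB t])
    have d: "((\<lambda>t. - (sin (w * t) * A t - cos (w * t) * B t) / w) has_real_derivative
       - ((cos (w * t) * w) * A t + sin (w * t) * (cos (w * t) * h t) - ((- sin (w * t) * w) * B t + cos (w * t) * (sin (w * t) * h t))) / w) (at t within {a..b})"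
      by (intro derivative_eq_intros dA dB refl) (use w in auto)
    have e: "- ((cos (w * t) * w) * A t + sin (w * t) * (cos (w * t) * h t) - ((- sin (w * t) * w) * B t + cos (w * t) * (sin (w * t) * h t))) / w = P1 t"
      using w unfolding P1_def by (simp add: field_simps)
    show "(P has_real_derivative P1 t) (at t within {a..b}) \<and>
      (P1 has_real_derivative (- (w * w) * P t - h t)) (at t within {a..b}) \<and>
      \<bar>P t\<bar> \<le> 2 * M * (b - a) / w \<and> \<bar>P1 t\<bar> \<le> 2 * M * (b - a)"
    proof (intro conjI)
      show "(P has_real_derivative P1 t) (at t within {a..b})" using d e unfolding P_def by simp
      have "((\<lambda>t. - (cos (w * t) * A t + sin (w * t) * B t)) has_real_derivative
         - ((- sin (w * t) * w) * A t + cos (w * t) * (cos (w * t) * h t) + ((cos (w * t) * w) * B t + sin (w * t) * (sin (w * t) * h t)))) (at t within {a..b})"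
        by (intro derivative_eq_intros dA dB refl) (use w in auto)
      moreover have "- ((- sin (w * t) * w) * A t + cos (w * t) * (cos (w * t) * h t) + ((cos (w * t) * w) * B t + sin (w * t) * (sin (w * t) * h t))) = - (w * w) * P t - h t"
      proof -
        have "cos (w * t) * (cos (w * t) * h t) + sin (w * t) * (sin (w * t) * h t) = h t"
        proof -
          have "cos (w * t) * (cos (w * t) * h t) + sin (w * t) * (sin (w * t) * h t)
             = ((sin (w * t))\<^sup>2 + (cos (w * t))\<^sup>2) * h t" by (simp only: power2_eq_square) (simp only: algebra_simps)
          then show ?thesis by simp
        qed
        then show ?thesis using w unfolding P_def by (simp add: field_simps)
      qed
      ultimately show "(P1 has_real_derivative (- (w * w) * P t - h t)) (at t within {a..b})"
        unfolding P1_def by simp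
      have "\<bar>sin (w * t) * A t - cos (w * t) * B t\<bar> \<le> \<bar>A t\<bar> + \<bar>B t\<bar>"
        by (rule order_trans[OF abs_triangle_ineq4]) (intro add_mono; simp add: abs_mult mult_left_le_one_le)
      also have "\<dots> \<le> 2 * M * (b - a)" using bA[OF t] bB[OF t] by simp
      finally show "\<bar>P t\<bar> \<le> 2 * M * (b - a) / w" using w unfolding P_def
        by (simp add: divide_right_mono)
      have "\<bar>cos (w * t) * A t + sin (w * t) * B t\<bar> \<le> \<bar>A t\<bar> + \<bar>B t\<bar>"
        by (rule order_trans[OF abs_triangle_ineq]) (intro add_mono; simp add: abs_mult mult_left_le_one_le)
      also have "\<dots> \<le> 2 * M * (b - a)" using bA[OF t] bB[OF t] by simp
      finally show "\<bar>P1 t\<bar> \<le> 2 * M * (b - a)" unfolding P1_def by simp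
    qed
  qed
qed

lemma uniq:
  fixes y y1 y2 :: "real \<Rightarrow> real" and w a b eps k :: real
  assumes ab: "a \<le> b" and w: "w > 0" and ep: "eps > 0" and ek: "eps * (w * w) = k"
    and d: "\<forall>t\<in>{a..b}. (y has_real_derivative y1 t) (at t within {a..b})
                \<and> (y1 has_real_derivative y2 t) (at t within {a..b})
                \<and> eps * y2 t + k * y t = 0"
    and ya: "y1 a = 0" and yb: "y1 b = 0" and sn: "sin (w * (b - a)) \<noteq> 0"
  shows "\<forall>t\<in>{a..b}. y t = 0"
proof -
  define q where "q t = y t - y a * cos (w * (t - a))" for t
  define q1 where "q1 t = y1 t + y a * w * sin (w * (t - a))" for t
  define E where "E t = (q1 t)^2 + w * w * (q t)^2" for t
  have y2e: "y2 t = - (w * w) * y t" if "t \<in> {a..b}" for t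
  proof -
    have "eps * y2 t + eps * (w * w) * y t = 0" using d that ek by auto
    then have "eps * (y2 t + (w * w) * y t) = 0" by (simp add: distrib_left mult.assoc)
    then have "y2 t + (w * w) * y t = 0" using ep by simp
    then show ?thesis by (simp add: add_eq_0_iff2)
  qed
  have dE: "(E has_real_derivative 0) (at t within {a..b})" if t: "t \<in> {a..b}" for t
  proof -
    have dy: "(y has_real_derivative y1 t) (at t within {a..b})"
      and dy1: "(y1 has_real_derivative y2 t) (at t within {a..b})" using d t by auto
    have dq: "(q has_real_derivative q1 t) (at t within {a..b})"
      unfolding q_def[abs_def] q1_def
      by (rule derivative_eq_intros dy refl | simp)+
    have dq1: "(q1 has_real_derivative (y2 t + y a * w * (cos (w * (t - a)) * w))) (at t within {a..b})"
      unfolding q1_def[abs_def]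
      by (rule derivative_eq_intros dy1 refl | simp)+
    have e1: "y2 t + y a * w * (cos (w * (t - a)) * w) = - (w * w) * q t"
      using y2e[OF t] unfolding q_def by (simp add: algebra_simps)
    have "(E has_real_derivative (2 * q1 t * (- (w * w) * q t) + w * w * (2 * q t * q1 t))) (at t within {a..b})"
      unfolding E_def[abs_def] using dq dq1[unfolded e1]
      by (auto intro!: derivative_eq_intros)
    then show ?thesis by (simp add: algebra_simps)
  qed
  obtain c where c: "\<forall>t\<in>{a..b}. E t = c"
    using has_field_derivative_zero_constant[of "{a..b}" E] dE by auto
  have "E a = 0" unfolding E_def q_def q1_def using ya by simp
  then have E0: "E t = 0" if "t \<in> {a..b}" for t using c that ab by auto
  have qz: "q t = 0 \<and> q1 t = 0" if t: "t \<in> {a..b}" for t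
  proof -
    have "(q1 t)^2 + w * w * (q t)^2 = 0" using E0[OF t] unfolding E_def .
    moreover have "(q1 t)^2 \<ge> 0" "w * w * (q t)^2 \<ge> 0" using w by auto
    ultimately have "(q1 t)^2 = 0" "w * w * (q t)^2 = 0" by linarith+
    then show ?thesis using w by simp
  qed
  have "q1 b = 0" using qz ab by auto
  then have "y a * w * sin (w * (b - a)) = 0" unfolding q1_def using yb by simp
  then have "y a = 0" using w sn by simp
  then show ?thesis using qz unfolding q_def by auto
qed



lemma sin_lam_bound:
  fixes lam x :: real and n :: nat
  assumes l0: "0 < lam" and l1: "lam \<le> pi / 2"
    and x1: "real n * pi + lam \<le> x" and x2: "x \<le> (real n + 1) * pi - lam"
  shows "sin lam \<le> \<bar>sin x\<bar>"
proof -
  define u where "u = x - real n * pi"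
  have "sin x = sin (u + real n * pi)" unfolding u_def by simp
  also have "\<dots> = sin u * (- 1) ^ n" by (simp add: sin_add)
  finally have sx: "\<bar>sin x\<bar> = \<bar>sin u\<bar>" by (simp add: abs_mult)
  have u1: "lam \<le> u" and u2: "u \<le> pi - lam" using x1 x2 unfolding u_def by (auto simp: algebra_simps)
  have "sin lam \<le> sin u"
  proof (cases "u \<le> pi / 2")
    case True
    then show ?thesis using sin_mono_le_eq[of lam u] u1 l0 l1 by auto
  next
    case False
    have "sin lam \<le> sin (pi - u)" using sin_mono_le_eq[of lam "pi - u"] u2 False l0 l1 by auto
    then show ?thesis by simp
  qed
  then show ?thesis using sx by linarith
qed

lemma omega_facts:
  fixes a b k lam e :: real and n :: nat
  assumes ab: "a < b" and k: "k > 0" and l0: "0 < lam" and l1: "lam \<le> pi / 2"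
    and e: "e \<in> {k * ((b - a) / ((real n + 1) * pi - lam))^2 .. k * ((b - a) / (real n * pi + lam))^2}"
  shows "e > 0" and "sqrt (k / e) > 0" and "e * (sqrt (k / e) * sqrt (k / e)) = k"
    and "real n * pi + lam \<le> sqrt (k / e) * (b - a)"
    and "sqrt (k / e) * (b - a) \<le> (real n + 1) * pi - lam"
    and "sqrt e \<le> sqrt k * (b - a) / (real n * pi + lam)"
proof -
  have "(real n + 1) * pi \<ge> 1 * pi" by (intro mult_right_mono) auto
  then have p1: "(real n + 1) * pi - lam > 0" using l1 pi_gt_zero by linarith
  have p2: "real n * pi + lam > 0" using l0 by (simp add: add_nonneg_pos)
  have L: "b - a > 0" using ab by simp
  show e0: "e > 0"
  proof -
    have "k * ((b - a) / ((real n + 1) * pi - lam))^2 > 0" using k L p1 by simp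
    then show ?thesis using e by auto
  qed
  define w where "w = sqrt (k / e)"
  show w0: "sqrt (k / e) > 0" using k e0 by simp
  have ww: "w * w = k / e" unfolding w_def using k e0 by simp
  show "e * (sqrt (k / e) * sqrt (k / e)) = k" using ww e0 unfolding w_def by simp
  have e2: "e \<le> k * (b - a)^2 / (real n * pi + lam)^2" using e by (simp add: power_divide)
  have e1: "k * (b - a)^2 / ((real n + 1) * pi - lam)^2 \<le> e" using e by (simp add: power_divide)
  have "(real n * pi + lam)^2 * e \<le> k * (b - a)^2" using e2 p2 by (simp add: field_simps)
  then have "(real n * pi + lam)^2 \<le> (k / e) * (b - a)^2" using e0 by (simp add: field_simps)
  moreover have wsq: "(w * (b - a))^2 = (k / e) * (b - a)^2" using ww by (simp add: power_mult_distrib power2_eq_square[of w])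
  ultimately have "(real n * pi + lam)^2 \<le> (w * (b - a))^2" by simp
  then show "real n * pi + lam \<le> sqrt (k / e) * (b - a)"
    unfolding w_def[symmetric] by (rule power2_le_imp_le) (use w0 L w_def in auto)
  have "k * (b - a)^2 \<le> ((real n + 1) * pi - lam)^2 * e" using e1 p1 by (simp add: field_simps)
  then have "(k / e) * (b - a)^2 \<le> ((real n + 1) * pi - lam)^2" using e0 by (simp add: field_simps)
  then have "(w * (b - a))^2 \<le> ((real n + 1) * pi - lam)^2" using wsq by simp
  then show "sqrt (k / e) * (b - a) \<le> (real n + 1) * pi - lam"
    unfolding w_def[symmetric] by (rule power2_le_imp_le) (use p1 in auto)
  have "sqrt e \<le> sqrt (k * ((b - a) / (real n * pi + lam))^2)" using e by auto
  also have "\<dots> = sqrt k * (b - a) / (real n * pi + lam)"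
    using L p2 by (simp add: real_sqrt_mult)
  finally show "sqrt e \<le> sqrt k * (b - a) / (real n * pi + lam)" .
qed

lemma per_eps:
  fixes a b k lam e Mh M1 :: real and n :: nat and f f1 f2 :: "real \<Rightarrow> real"
  assumes ab: "a < b" and k: "k > 0" and l0: "0 < lam" and l1: "lam \<le> pi / 2"
    and df: "\<forall>t\<in>{a..b}. (f has_real_derivative f1 t) (at t within {a..b})
                \<and> (f1 has_real_derivative f2 t) (at t within {a..b})"
    and cf2: "continuous_on {a..b} f2"
    and Mh: "\<forall>t\<in>{a..b}. \<bar>f2 t / k\<bar> \<le> Mh" and M1: "\<forall>t\<in>{a..b}. \<bar>f1 t / k\<bar> \<le> M1"
    and e: "e \<in> J_int k a b lam n"
  shows "(\<exists>y. neumann_sol e k f a b y)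
     \<and> (\<forall>y z. neumann_sol e k f a b y \<and> neumann_sol e k f a b z \<longrightarrow> (\<forall>t\<in>{a..b}. y t = z t))
     \<and> (\<forall>y. neumann_sol e k f a b y \<longrightarrow> (\<forall>t\<in>{a..b}. \<bar>y t - f t / k\<bar>
           \<le> ((2*Mh*(b-a) + (2*Mh*(b-a) + 2*M1)/sin lam + M1) / sqrt k) * sqrt e))"
proof -
  note e' = e[unfolded J_int_def]
  note om = omega_facts[OF ab k l0 l1 e']
  define w where "w = sqrt (k / e)"
  have e0: "e > 0" using om by simp
  have w0: "w > 0" and ew: "e * (w * w) = k" using om unfolding w_def by auto
  have sl: "sin lam \<le> \<bar>sin (w * (b - a))\<bar>"
    by (rule sin_lam_bound[OF l0 l1]) (use om in \<open>auto simp: w_def\<close>)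
  have sl0: "sin lam > 0" using l0 l1 pi_gt_zero by (intro sin_gt_zero) auto
  have sn: "sin (w * (b - a)) \<noteq> 0" using sl sl0 by auto
  have U: "\<forall>y z. neumann_sol e k f a b y \<and> neumann_sol e k f a b z \<longrightarrow> (\<forall>t\<in>{a..b}. y t = z t)"
  proof (intro allI impI)
    fix y z assume "neumann_sol e k f a b y \<and> neumann_sol e k f a b z"
    then obtain y1 y2 z1 z2 where
      y: "\<forall>t\<in>{a..b}. (y has_real_derivative y1 t) (at t within {a..b})
                \<and> (y1 has_real_derivative y2 t) (at t within {a..b})
                \<and> e * y2 t + k * y t = f t" "y1 a = 0" "y1 b = 0"
      and z: "\<forall>t\<in>{a..b}. (z has_real_derivative z1 t) (at t within {a..b})
                \<and> (z1 has_real_derivative z2 t) (at t within {a..b})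
                \<and> e * z2 t + k * z t = f t" "z1 a = 0" "z1 b = 0"
      unfolding neumann_sol_def by blast
    have D: "\<forall>t\<in>{a..b}. ((\<lambda>t. y t - z t) has_real_derivative (\<lambda>t. y1 t - z1 t) t) (at t within {a..b}) \<and>
        ((\<lambda>t. y1 t - z1 t) has_real_derivative (\<lambda>t. y2 t - z2 t) t) (at t within {a..b}) \<and>
        e * (\<lambda>t. y2 t - z2 t) t + k * (\<lambda>t. y t - z t) t = 0"
    proof
      fix t assume t: "t \<in> {a..b}"
      have "e * (y2 t - z2 t) + k * (y t - z t) = (e * y2 t + k * y t) - (e * z2 t + k * z t)"
        by (simp add: algebra_simps)
      also have "\<dots> = 0" using y z t by auto
      finally show "((\<lambda>t. y t - z t) has_real_derivative (\<lambda>t. y1 t - z1 t) t) (at t within {a..b}) \<and>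
        ((\<lambda>t. y1 t - z1 t) has_real_derivative (\<lambda>t. y2 t - z2 t) t) (at t within {a..b}) \<and>
        e * (\<lambda>t. y2 t - z2 t) t + k * (\<lambda>t. y t - z t) t = 0"
        using y z t by (auto intro!: DERIV_diff)
    qed
    have "\<forall>t\<in>{a..b}. (\<lambda>t. y t - z t) t = 0"
      by (rule uniq[OF _ w0 e0 ew D _ _ sn]) (use y z ab in auto)
    then show "\<forall>t\<in>{a..b}. y t = z t" by simp
  qed
  define h where "h t = f2 t / k" for t
  have hc: "continuous_on {a..b} h" unfolding h_def[abs_def] by (intro continuous_intros cf2) (use k in auto)
  have hM: "\<And>t. t \<in> {a..b} \<Longrightarrow> \<bar>h t\<bar> \<le> Mh" using Mh unfolding h_def by auto
  define A where "A = (\<lambda>t. integral {a..t} (\<lambda>s. cos (w * s) * h s))"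
  define B where "B = (\<lambda>t. integral {a..t} (\<lambda>s. sin (w * s) * h s))"
  define P where "P = (\<lambda>t. - (sin (w * t) * A t - cos (w * t) * B t) / w)"
  define P1 where "P1 = (\<lambda>t. - (cos (w * t) * A t + sin (w * t) * B t))"
  note V = vp[of a b w h Mh A B P P1, OF _ w0 hc hM A_def B_def P_def P1_def]
  have V1: "\<forall>t\<in>{a..b}. (P has_real_derivative P1 t) (at t within {a..b})
          \<and> (P1 has_real_derivative (- (w * w) * P t - h t)) (at t within {a..b})
          \<and> \<bar>P t\<bar> \<le> 2 * Mh * (b - a) / w \<and> \<bar>P1 t\<bar> \<le> 2 * Mh * (b - a)"
    using V(1) ab by auto
  have P1a: "P1 a = 0" using V(2) ab by auto
  define L where "L = b - a"
  define d0 where "d0 = - (f1 a / k) / w"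
  define c0 where "c0 = (P1 b + f1 b / k - (f1 a / k) * cos (w * L)) / (w * sin (w * L))"
  define z where "z t = P t + c0 * cos (w * (t - a)) + d0 * sin (w * (t - a))" for t
  define y where "y t = f t / k + z t" for t
  define y1 where "y1 t = f1 t / k + P1 t - c0 * w * sin (w * (t - a)) + d0 * w * cos (w * (t - a))" for t
  define y2 where "y2 t = - (w * w) * z t" for t
  have cP: "continuous_on {a..b} P" by (rule DERIV_continuous_on[where D = P1]) (use V1 in auto)
  have cz: "continuous_on {a..b} z" unfolding z_def[abs_def] by (intro continuous_intros cP)
  have sol: "neumann_sol e k f a b y"
    unfolding neumann_sol_def
  proof (intro exI conjI ballI)
    fix t assume t: "t \<in> {a..b}"
    have dF: "(f has_real_derivative D) (at t within {a..b})" if "D = f1 t" for D using df t that by auto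
    have dF1: "(f1 has_real_derivative D) (at t within {a..b})" if "D = f2 t" for D using df t that by auto
    have dP: "(P has_real_derivative D) (at t within {a..b})" if "D = P1 t" for D using V1 t that by auto
    have dP1: "(P1 has_real_derivative D) (at t within {a..b})" if "D = - (w * w) * P t - h t" for D using V1 t that by auto
    show "(y has_real_derivative y1 t) (at t within {a..b})"
      unfolding y_def[abs_def] z_def y1_def
      by (rule derivative_eq_intros dF dP refl | use k in \<open>simp add: algebra_simps\<close>)+
    show "(y1 has_real_derivative y2 t) (at t within {a..b})"
      unfolding y1_def[abs_def] y2_def z_def
      by (rule derivative_eq_intros dF1 dP1 refl | use k in \<open>simp add: algebra_simps h_def\<close>)+
    have "e * y2 t = - (e * (w * w)) * z t" unfolding y2_def by (simp add: algebra_simps)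
    then show "e * y2 t + k * y t = f t" unfolding ew y_def using k by (simp add: algebra_simps)
  next
    show "continuous_on {a..b} y2" unfolding y2_def[abs_def] by (intro continuous_intros cz)
  next
    show "y1 a = 0" unfolding y1_def d0_def using P1a w0 by simp
  next
    have "c0 * w * sin (w * L) = P1 b + f1 b / k - (f1 a / k) * cos (w * L)"
    proof -
      have snL: "sin (w * L) \<noteq> 0" using sn unfolding L_def .
      show ?thesis unfolding c0_def using w0 snL by (simp add: field_simps)
    qed
    then show "y1 b = 0" unfolding y1_def d0_def L_def[symmetric] using w0 by (simp add: field_simps)
  qed
  define K where "K = 2*Mh*(b-a) + (2*Mh*(b-a) + 2*M1)/sin lam + M1"
  have bound: "\<bar>y t - f t / k\<bar> \<le> (K / sqrt k) * sqrt e" if t: "t \<in> {a..b}" for t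
  proof -
    have "\<bar>y t - f t / k\<bar> = \<bar>z t\<bar>" unfolding y_def by simp
    also have "\<dots> \<le> \<bar>P t\<bar> + \<bar>c0\<bar> + \<bar>d0\<bar>"
    proof -
      have "\<bar>c0 * cos (w * (t - a))\<bar> \<le> \<bar>c0\<bar>" unfolding abs_mult by (rule mult_right_le_one_le) auto
      moreover have "\<bar>d0 * sin (w * (t - a))\<bar> \<le> \<bar>d0\<bar>" unfolding abs_mult by (rule mult_right_le_one_le) auto
      ultimately show ?thesis unfolding z_def by linarith
    qed
    also have "\<dots> \<le> 2 * Mh * (b - a) / w + (2 * Mh * (b - a) + 2 * M1) / (w * sin lam) + M1 / w"
    proof -
      have p: "\<bar>P t\<bar> \<le> 2 * Mh * (b - a) / w" using V1 t by auto
      have d1: "\<bar>d0\<bar> = \<bar>f1 a / k\<bar> / w" unfolding d0_def using w0 by (simp add: abs_mult)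
      have d: "\<bar>d0\<bar> \<le> M1 / w" unfolding d1 using M1 ab w0
        by (intro divide_right_mono) auto
      have num: "\<bar>P1 b + f1 b / k - (f1 a / k) * cos (w * L)\<bar> \<le> 2 * Mh * (b - a) + 2 * M1"
      proof -
        have "\<bar>(f1 a / k) * cos (w * L)\<bar> \<le> \<bar>f1 a / k\<bar>" unfolding abs_mult by (rule mult_right_le_one_le) auto
        moreover have "\<bar>P1 b\<bar> \<le> 2 * Mh * (b - a)" using V1 ab by auto
        moreover have "\<bar>f1 a / k\<bar> \<le> M1" "\<bar>f1 b / k\<bar> \<le> M1" using M1 ab by auto
        ultimately show ?thesis by linarith
      qed
      have c: "\<bar>c0\<bar> \<le> (2 * Mh * (b - a) + 2 * M1) / (w * sin lam)"
      proof -
        have "\<bar>c0\<bar> = \<bar>P1 b + f1 b / k - (f1 a / k) * cos (w * L)\<bar> / (w * \<bar>sin (w * L)\<bar>)"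
          unfolding c0_def using w0 by (simp add: abs_mult abs_div)
        also have "\<dots> \<le> (2 * Mh * (b - a) + 2 * M1) / (w * sin lam)"
          by (rule frac_le) (use num sl sl0 w0 L_def in \<open>auto intro: mult_left_mono\<close>)
        finally show ?thesis .
      qed
      show ?thesis using p c d by linarith
    qed
    also have "\<dots> = K / w" unfolding K_def using w0 sl0 by (simp add: field_simps)
    also have "\<dots> = (K / sqrt k) * sqrt e" unfolding w_def using e0 k by (simp add: real_sqrt_divide)
    finally show ?thesis .
  qed
  show ?thesis
  proof (intro conjI)
    show "\<exists>y. neumann_sol e k f a b y" using sol by blast
    show "\<forall>y z. neumann_sol e k f a b y \<and> neumann_sol e k f a b z \<longrightarrow> (\<forall>t\<in>{a..b}. y t = z t)" by (rule U)
    show "\<forall>y'. neumann_sol e k f a b y' \<longrightarrow> (\<forall>t\<in>{a..b}. \<bar>y' t - f t / k\<bar>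
           \<le> ((2*Mh*(b-a) + (2*Mh*(b-a) + 2*M1)/sin lam + M1) / sqrt k) * sqrt e)"
    proof (intro allI impI ballI)
      fix y' t assume y': "neumann_sol e k f a b y'" and t: "t \<in> {a..b}"
      have "y' t = y t" using U y' sol t by blast
      then show "\<bar>y' t - f t / k\<bar> \<le> ((2*Mh*(b-a) + (2*Mh*(b-a) + 2*M1)/sin lam + M1) / sqrt k) * sqrt e"
        using bound[OF t] unfolding K_def by simp
    qed
  qed
qed

theorem theorem1:
  fixes a b k lam :: real and f :: "real \<Rightarrow> real"
  assumes "a < b" and "k > 0" and "0 < lam" and "lam \<le> pi / 2"
    and "C3_on a b f"
  shows "\<exists>C. \<forall>eps :: nat \<Rightarrow> real. (\<forall>n. eps n \<in> J_int k a b lam n) \<longrightarrow>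
     (\<forall>n. (\<exists>y. neumann_sol (eps n) k f a b y)
          \<and> (\<forall>y z. neumann_sol (eps n) k f a b y \<and> neumann_sol (eps n) k f a b z
                   \<longrightarrow> (\<forall>t\<in>{a..b}. y t = z t))
          \<and> (\<forall>y. neumann_sol (eps n) k f a b y
                   \<longrightarrow> (\<forall>t\<in>{a..b}. \<bar>y t - f t / k\<bar> \<le> C * sqrt (eps n))))
     \<and> (\<forall>e>0. \<exists>N. \<forall>n\<ge>N. \<forall>y. neumann_sol (eps n) k f a b y
                   \<longrightarrow> (\<forall>t\<in>{a..b}. \<bar>y t - f t / k\<bar> < e))"
proof -
  note ab = assms(1) and k = assms(2) and l0 = assms(3) and l1 = assms(4)
  obtain f1 f2 f3 where fd: "\<forall>t\<in>{a..b}. (f has_real_derivative f1 t) (at t within {a..b})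
                \<and> (f1 has_real_derivative f2 t) (at t within {a..b})
                \<and> (f2 has_real_derivative f3 t) (at t within {a..b})"
    using assms(5) unfolding C3_on_def by blast
  have df: "\<forall>t\<in>{a..b}. (f has_real_derivative f1 t) (at t within {a..b})
                \<and> (f1 has_real_derivative f2 t) (at t within {a..b})" using fd by blast
  have cf1: "continuous_on {a..b} f1" by (rule DERIV_continuous_on[where D = f2]) (use fd in auto)
  have cf2: "continuous_on {a..b} f2" by (rule DERIV_continuous_on[where D = f3]) (use fd in auto)
  have "bounded ((\<lambda>t. f2 t / k) ` {a..b})"
    by (intro compact_imp_bounded compact_continuous_image compact_Icc continuous_intros cf2) (use k in auto)
  then obtain Mh where Mh0: "Mh > 0" and Mh: "\<forall>t\<in>{a..b}. \<bar>f2 t / k\<bar> \<le> Mh"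
    unfolding bounded_pos by auto
  have "bounded ((\<lambda>t. f1 t / k) ` {a..b})"
    by (intro compact_imp_bounded compact_continuous_image compact_Icc continuous_intros cf1) (use k in auto)
  then obtain M1 where M10: "M1 > 0" and M1: "\<forall>t\<in>{a..b}. \<bar>f1 t / k\<bar> \<le> M1"
    unfolding bounded_pos by auto
  have sl0: "sin lam > 0" using l0 l1 pi_gt_zero by (intro sin_gt_zero) auto
  define C where "C = (2*Mh*(b-a) + (2*Mh*(b-a) + 2*M1)/sin lam + M1) / sqrt k"
  have C0: "C \<ge> 0" unfolding C_def using Mh0 M10 sl0 ab k by (auto intro!: divide_nonneg_pos add_nonneg_nonneg)
  show ?thesis
  proof (rule exI[where x = C], intro allI impI, rule conjI)
    fix eps :: "nat \<Rightarrow> real" assume E: "\<forall>n. eps n \<in> J_int k a b lam n"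
    note PE = per_eps[OF ab k l0 l1 df cf2 Mh M1 E[rule_format], folded C_def]
    show "\<forall>n. (\<exists>y. neumann_sol (eps n) k f a b y)
          \<and> (\<forall>y z. neumann_sol (eps n) k f a b y \<and> neumann_sol (eps n) k f a b z
                   \<longrightarrow> (\<forall>t\<in>{a..b}. y t = z t))
          \<and> (\<forall>y. neumann_sol (eps n) k f a b y
                   \<longrightarrow> (\<forall>t\<in>{a..b}. \<bar>y t - f t / k\<bar> \<le> C * sqrt (eps n)))"
      using PE by blast
  next
    fix eps :: "nat \<Rightarrow> real" assume E: "\<forall>n. eps n \<in> J_int k a b lam n"
    note PE = per_eps[OF ab k l0 l1 df cf2 Mh M1 E[rule_format], folded C_def]
    show "\<forall>e>0. \<exists>N. \<forall>n\<ge>N. \<forall>y. neumann_sol (eps n) k f a b y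
                   \<longrightarrow> (\<forall>t\<in>{a..b}. \<bar>y t - f t / k\<bar> < e)"
    proof (intro allI impI)
      fix e :: real assume e0: "e > 0"
      obtain N :: nat where N: "C * sqrt k * (b - a) / (e * pi) < real N"
        using reals_Archimedean2 by blast
      show "\<exists>N. \<forall>n\<ge>N. \<forall>y. neumann_sol (eps n) k f a b y \<longrightarrow> (\<forall>t\<in>{a..b}. \<bar>y t - f t / k\<bar> < e)"
      proof (intro exI[where x = N] allI impI ballI)
        fix n y t assume n: "N \<le> n" and y: "neumann_sol (eps n) k f a b y" and t: "t \<in> {a..b}"
        have p2: "real n * pi + lam > 0" using l0 by (simp add: add_nonneg_pos)
        have s: "sqrt (eps n) \<le> sqrt k * (b - a) / (real n * pi + lam)"
          using omega_facts(6)[OF ab k l0 l1 E[rule_format, of n, unfolded J_int_def]] .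
        have "C * sqrt k * (b - a) < e * pi * real N" using N e0 pi_gt_zero by (simp add: field_simps)
        also have "\<dots> \<le> e * pi * real n" using n e0 pi_gt_zero by simp
        also have "\<dots> < e * (real n * pi + lam)" using e0 l0 by (simp add: algebra_simps)
        finally have lt: "C * (sqrt k * (b - a) / (real n * pi + lam)) < e" using p2 by (simp add: field_simps)
        have "\<bar>y t - f t / k\<bar> \<le> C * sqrt (eps n)" using PE[of n] y t by blast
        also have "\<dots> \<le> C * (sqrt k * (b - a) / (real n * pi + lam))" by (rule mult_left_mono[OF s C0])
        finally show "\<bar>y t - f t / k\<bar> < e" using lt by linarith
      qed
    qed
  qed
qed

end
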